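(* For every integer $N\ge 1$, the number of tuples $(\mu_1,\dots,\mu_4;d_1,\dots,d_4)\in P^4\times\mathbb Z^4$ with $d_1+d_2+d_3+d_4$ odd and $$14\sum_{i=1}^4|\mu_i|+14\sum_{i=1}^4\binom{d_i}{2}+d_1+3d_2+5d_3+7d_4=N$$ equals the number of tuples $(\alpha_1,\dots,\alpha_4;e_1,\dots,e_4)\in P^4\times\mathbb Z^4$ with $e_1+e_2+e_3+e_4$ odd and $$14\sum_{i=1}^4|\alpha_i|+14\sum_{i=1}^4\binom{e_i}{2}+0e_1+2e_2+4e_3+6e_4+1=N.$$
   Context: $P$ denotes the set of all integer partitions into positive parts (including the empty partition); for a partition $\lambda$, $|\lambda|$ is the sum of its parts. For $d\in\mathbb Z$, $\binom{d}{2}=d(d-1)/2$. *)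

theory Defs
  imports Main "HOL-Library.Multiset"
begin

definition partitions :: "nat multiset set" where
  "partitions = {\<mu>. \<forall>x\<in>#\<mu>. 0 < x}"

definition psize :: "nat multiset \<Rightarrow> int" where
  "psize \<mu> = int (sum_mset \<mu>)"

definition binom2 :: "int \<Rightarrow> int" where
  "binom2 d = d * (d - 1) div 2"

definition lhs_set :: "int \<Rightarrow> ((nat multiset \<times> nat multiset \<times> nat multiset \<times> nat multiset) \<times> (int \<times> int \<times> int \<times> int)) set" where
  "lhs_set N = {((m1,m2,m3,m4),(d1,d2,d3,d4)).
     m1 \<in> partitions \<and> m2 \<in> partitions \<and> m3 \<in> partitions \<and> m4 \<in> partitions \<and>
     odd (d1+d2+d3+d4) \<and>
     14*(psize m1 + psize m2 + psize m3 + psize m4)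
     + 14*(binom2 d1 + binom2 d2 + binom2 d3 + binom2 d4)
     + d1 + 3*d2 + 5*d3 + 7*d4 = N}"

definition rhs_set :: "int \<Rightarrow> ((nat multiset \<times> nat multiset \<times> nat multiset \<times> nat multiset) \<times> (int \<times> int \<times> int \<times> int)) set" where
  "rhs_set N = {((a1,a2,a3,a4),(e1,e2,e3,e4)).
     a1 \<in> partitions \<and> a2 \<in> partitions \<and> a3 \<in> partitions \<and> a4 \<in> partitions \<and>
     odd (e1+e2+e3+e4) \<and>
     14*(psize a1 + psize a2 + psize a3 + psize a4)
     + 14*(binom2 e1 + binom2 e2 + binom2 e3 + binom2 e4)
     + 0*e1 + 2*e2 + 4*e3 + 6*e4 + 1 = N}"

end

theory Submission
  imports Defs
begin

lemma binom2_twice: "2 * binom2 d = d * (d - 1)"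
proof -
  have "even (d * (d - 1))" by simp
  then show ?thesis unfolding binom2_def by simp
qed

lemma key:
  fixes d1 d2 d3 d4 k :: int
  assumes "d1+d2+d3+d4 = 2*k+1"
  shows "14*(binom2 (d1-k) + binom2 (d2-k) + binom2 (d3-k) + binom2 (d4-k))
     + 0*(d1-k) + 2*(d2-k) + 4*(d3-k) + 6*(d4-k) + 1
   = 14*(binom2 d1 + binom2 d2 + binom2 d3 + binom2 d4) + d1 + 3*d2 + 5*d3 + 7*d4"
proof -
  have d4: "d4 = 2*k+1-d1-d2-d3" using assms by simp
  have "2*(14*(binom2 (d1-k) + binom2 (d2-k) + binom2 (d3-k) + binom2 (d4-k))
     + 0*(d1-k) + 2*(d2-k) + 4*(d3-k) + 6*(d4-k) + 1)
   = 2*(14*(binom2 d1 + binom2 d2 + binom2 d3 + binom2 d4) + d1 + 3*d2 + 5*d3 + 7*d4)"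
    unfolding distrib_left mult.assoc[symmetric]
    apply (simp only: mult.commute[of 2 14] mult.assoc binom2_twice)
    unfolding d4 by algebra
  then show ?thesis by simp
qed

definition fshift :: "int \<times> int \<times> int \<times> int \<Rightarrow> int \<times> int \<times> int \<times> int" where
  "fshift = (\<lambda>(d1,d2,d3,d4). let k = (d1+d2+d3+d4-1) div 2 in (d1-k,d2-k,d3-k,d4-k))"

lemma fshift_inv:
  assumes "odd (d1+d2+d3+d4)"
  shows "fshift (fshift (d1,d2,d3,d4)) = (d1,d2,d3,d4)"
proof -
  obtain k where k: "d1+d2+d3+d4 = 2*k+1" using assms oddE by blast
  have a: "(d1+d2+d3+d4-1) div 2 = k" using k by simp
  have b: "((d1-k)+(d2-k)+(d3-k)+(d4-k)-1) div 2 = -k" using k by simp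
  show ?thesis unfolding fshift_def using a b by (simp add: Let_def)
qed

lemma fshift_odd:
  assumes "odd (d1+d2+d3+d4)" "fshift (d1,d2,d3,d4) = (e1,e2,e3,e4)"
  shows "odd (e1+e2+e3+e4)"
proof -
  obtain k where k: "d1+d2+d3+d4 = 2*k+1" using assms oddE by blast
  have a: "(d1+d2+d3+d4-1) div 2 = k" using k by simp
  have "e1+e2+e3+e4 = 2*(-k) + 1" using assms(2) k unfolding fshift_def by (auto simp: Let_def a)
  then show ?thesis by presburger
qed

definition F where "F = (\<lambda>(m::nat multiset \<times> nat multiset \<times> nat multiset \<times> nat multiset, d). (m, fshift d))"

lemma F_lhs: "x \<in> lhs_set N \<Longrightarrow> F x \<in> rhs_set N"
proof -
  assume "x \<in> lhs_set N"
  then obtain m1 m2 m3 m4 d1 d2 d3 d4 where x: "x = ((m1,m2,m3,m4),(d1,d2,d3,d4))"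
    and p: "m1 \<in> partitions" "m2 \<in> partitions" "m3 \<in> partitions" "m4 \<in> partitions"
    and o: "odd (d1+d2+d3+d4)"
    and eq: "14*(psize m1 + psize m2 + psize m3 + psize m4)
     + 14*(binom2 d1 + binom2 d2 + binom2 d3 + binom2 d4)
     + d1 + 3*d2 + 5*d3 + 7*d4 = N"
    unfolding lhs_set_def by (clarsimp simp del: odd_add even_add)
  obtain k where k: "d1+d2+d3+d4 = 2*k+1" using o oddE by blast
  have a: "(d1+d2+d3+d4-1) div 2 = k" using k by simp
  have fx: "F x = ((m1,m2,m3,m4),(d1-k,d2-k,d3-k,d4-k))"
    unfolding x F_def fshift_def by (simp add: Let_def a)
  have "(d1-k)+(d2-k)+(d3-k)+(d4-k) = 2*(-k)+1" using k by simp
  then have o2: "odd ((d1-k)+(d2-k)+(d3-k)+(d4-k))" by presburger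
  have eq2: "14*(psize m1 + psize m2 + psize m3 + psize m4)
     + 14*(binom2 (d1-k) + binom2 (d2-k) + binom2 (d3-k) + binom2 (d4-k))
     + 0*(d1-k) + 2*(d2-k) + 4*(d3-k) + 6*(d4-k) + 1 = N"
    using eq key[OF k] by linarith
  show ?thesis unfolding fx rhs_set_def mem_Collect_eq case_prod_conv
    using p o2 eq2 by blast
qed

lemma F_inv: "x \<in> lhs_set N \<or> x \<in> rhs_set N \<Longrightarrow> F (F x) = x"
proof -
  assume "x \<in> lhs_set N \<or> x \<in> rhs_set N"
  then obtain m d1 d2 d3 d4 where x: "x = (m,(d1,d2,d3,d4))" and o: "odd (d1+d2+d3+d4)"
    unfolding lhs_set_def rhs_set_def mem_Collect_eq by (elim disjE; clarify; blast)
  show ?thesis unfolding x F_def using fshift_inv[OF o] by simp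
qed

lemma F_rhs: "x \<in> rhs_set N \<Longrightarrow> F x \<in> lhs_set N"
proof -
  assume "x \<in> rhs_set N"
  then obtain m1 m2 m3 m4 e1 e2 e3 e4 where x: "x = ((m1,m2,m3,m4),(e1,e2,e3,e4))"
    and p: "m1 \<in> partitions" "m2 \<in> partitions" "m3 \<in> partitions" "m4 \<in> partitions"
    and o: "odd (e1+e2+e3+e4)"
    and eq: "14*(psize m1 + psize m2 + psize m3 + psize m4)
     + 14*(binom2 e1 + binom2 e2 + binom2 e3 + binom2 e4)
     + 0*e1 + 2*e2 + 4*e3 + 6*e4 + 1 = N"
    unfolding rhs_set_def by (clarsimp simp del: odd_add even_add)
  obtain j where j: "e1+e2+e3+e4 = 2*j+1" using o oddE by blast
  have a: "(e1+e2+e3+e4-1) div 2 = j" using j by simp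
  define k where "k = -j"
  have k: "(e1-j)+(e2-j)+(e3-j)+(e4-j) = 2*k+1" using j k_def by simp
  have e: "e1 = (e1-j)-k" "e2 = (e2-j)-k" "e3 = (e3-j)-k" "e4 = (e4-j)-k" using k_def by auto
  have fx: "F x = ((m1,m2,m3,m4),(e1-j,e2-j,e3-j,e4-j))"
    unfolding x F_def fshift_def by (simp add: Let_def a)
  have o2: "odd ((e1-j)+(e2-j)+(e3-j)+(e4-j))" using k by presburger
  have K: "14*(binom2 e1 + binom2 e2 + binom2 e3 + binom2 e4)
     + 0*e1 + 2*e2 + 4*e3 + 6*e4 + 1
   = 14*(binom2 (e1-j) + binom2 (e2-j) + binom2 (e3-j) + binom2 (e4-j)) + (e1-j) + 3*(e2-j) + 5*(e3-j) + 7*(e4-j)"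
    using key[OF k] unfolding k_def by simp
  have eq2: "14*(psize m1 + psize m2 + psize m3 + psize m4)
     + 14*(binom2 (e1-j) + binom2 (e2-j) + binom2 (e3-j) + binom2 (e4-j))
     + (e1-j) + 3*(e2-j) + 5*(e3-j) + 7*(e4-j) = N"
    using eq K by linarith
  show ?thesis unfolding fx lhs_set_def mem_Collect_eq case_prod_conv
    using p o2 eq2 by blast
qed

theorem lemma3p1:
  fixes N :: int
  assumes "N \<ge> 1"
  shows "card (lhs_set N) = card (rhs_set N)"
proof -
  have inj: "inj_on F (lhs_set N)"
    by (metis F_inv inj_onI)
  have "F ` lhs_set N = rhs_set N"
  proof
    show "F ` lhs_set N \<subseteq> rhs_set N" using F_lhs by blast
    show "rhs_set N \<subseteq> F ` lhs_set N"
      by (metis F_inv F_rhs image_eqI subsetI)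
  qed
  then show ?thesis using card_image[OF inj] by simp
qed

end
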